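(* Let $D=(V,A)$ be a directed graph with source $s\in V$, sink $t\in V$, capacities $u\in\mathbb{R}_+^A$, interdiction costs $c\in\mathbb{R}_+^A$, and interdictor budget $B_I\ge 0$, and assume at least one arc has positive interdiction cost. For each arc $f\in A$ with $c_f>0$, let $x^{(f)}$ be an optimal solution of the linear program $[\mathrm{LP}_{\mathrm{flow}}(f)]$ (defined in the context), and let $f^*$ be an arc for which the optimal objective value of $[\mathrm{LP}_{\mathrm{flow}}(f^* )]$ is largest. Then $x^{(f^* )}$ is an optimal strategy for the flow player, i.e. $x^{(f^* )}\in\arg\max_{x\in X}\min_{z\in\Omega}\mathrm{val}(x,z)$.
   Context: $\mathcal{P}$ is the set of all $s$-$t$-paths in $D$ (a path is identified with its arc set). The flow player's strategies are the feasible path flows $X=\{x\in\mathbb{R}_+^{\mathcal{P}}:\sum_{P\in\mathcal{P}:e\in P}x_P\le u_e\ \forall e\in A\}$. After the flow player chooses $x$, the interdictor chooses $z\in\Omega=\{z\in\mathbb{R}_+^{A\times\mathcal{P}}:\sum_{e\in A}c_e\sum_{P\in\mathcal{P}:e\in P}z_{e,P}\le B_I\}$ ($z_{e,P}$ is the amount of flow stolen from path $P$ at arc $e$). The value is $\mathrm{val}(x,z)=\sum_{P\in\mathcal{P}}\big(x_P-\sum_{e\in P}z_{e,P}\big)^+$; the flow player maximizes $\min_{z\in\Omega}\mathrm{val}(x,z)$. For a fixed arc $f$ with $c_f>0$ define $B'=B_I/c_f$, $c'_e=\min\{c_e/c_f,1\}$ for $e\in A$, and $\bar c'_P=\min_{e\in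 P}c'_e$ for $P\in\mathcal{P}$. Then $[\mathrm{LP}_{\mathrm{flow}}(f)]$ is: maximize $\sum_{P\in\mathcal{P}}\bar c'_P x_P-B'$ subject to $\sum_{P\in\mathcal{P}:e\in P}x_P\le u_e$ for all $e\in A$ and $x_P\ge 0$ for all $P\in\mathcal{P}$. *)

theory Defs
  imports Complex_Main
begin

text \<open>Arcs are elements of an abstract type 'a with tail and head maps (parallel arcs allowed).
A path is a nonempty list of arcs whose vertex sequence is simple, starting at s and ending at t;
it is identified with its arc set.\<close>

definition st_path :: "('a \<Rightarrow> 'v) \<Rightarrow> ('a \<Rightarrow> 'v) \<Rightarrow> 'a set \<Rightarrow> 'v \<Rightarrow> 'v \<Rightarrow> 'a list \<Rightarrow> bool" where
  "st_path tail head A s t es \<longleftrightarrow>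
     es \<noteq> [] \<and> set es \<subseteq> A \<and>
     (\<forall>i. Suc i < length es \<longrightarrow> head (es ! i) = tail (es ! Suc i)) \<and>
     tail (es ! 0) = s \<and> head (last es) = t \<and>
     distinct (tail (es ! 0) # map head es)"

definition st_paths :: "('a \<Rightarrow> 'v) \<Rightarrow> ('a \<Rightarrow> 'v) \<Rightarrow> 'a set \<Rightarrow> 'v \<Rightarrow> 'v \<Rightarrow> 'a set set" where
  "st_paths tail head A s t = {set es | es. st_path tail head A s t es}"

definition flows :: "'a set set \<Rightarrow> 'a set \<Rightarrow> ('a \<Rightarrow> real) \<Rightarrow> ('a set \<Rightarrow> real) set" where
  "flows Ps A u = {x. (\<forall>P. P \<notin> Ps \<longrightarrow> x P = 0) \<and> (\<forall>P\<in>Ps. 0 \<le> x P) \<and>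
                      (\<forall>e\<in>A. (\<Sum>P\<in>{P\<in>Ps. e \<in> P}. x P) \<le> u e)}"

definition interdictions :: "'a set set \<Rightarrow> 'a set \<Rightarrow> ('a \<Rightarrow> real) \<Rightarrow> real \<Rightarrow> ('a \<Rightarrow> 'a set \<Rightarrow> real) set" where
  "interdictions Ps A c BI = {z. (\<forall>e P. (e \<notin> A \<or> P \<notin> Ps) \<longrightarrow> z e P = 0) \<and>
                                 (\<forall>e\<in>A. \<forall>P\<in>Ps. 0 \<le> z e P) \<and>
                                 (\<Sum>e\<in>A. c e * (\<Sum>P\<in>{P\<in>Ps. e \<in> P}. z e P)) \<le> BI}"

definition val :: "'a set set \<Rightarrow> ('a set \<Rightarrow> real) \<Rightarrow> ('a \<Rightarrow> 'a set \<Rightarrow> real) \<Rightarrow> real" where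
  "val Ps x z = (\<Sum>P\<in>Ps. max 0 (x P - (\<Sum>e\<in>P. z e P)))"

definition worst_val :: "'a set set \<Rightarrow> 'a set \<Rightarrow> ('a \<Rightarrow> real) \<Rightarrow> real \<Rightarrow> ('a set \<Rightarrow> real) \<Rightarrow> real" where
  "worst_val Ps A c BI x = (INF z\<in>interdictions Ps A c BI. val Ps x z)"

definition lp_obj :: "'a set set \<Rightarrow> ('a \<Rightarrow> real) \<Rightarrow> real \<Rightarrow> 'a \<Rightarrow> ('a set \<Rightarrow> real) \<Rightarrow> real" where
  "lp_obj Ps c BI f x =
     (let c' = (\<lambda>e. min (c e / c f) 1); B' = BI / c f
      in (\<Sum>P\<in>Ps. Min (c' ` P) * x P) - B')"

definition lp_optimal :: "'a set set \<Rightarrow> 'a set \<Rightarrow> ('a \<Rightarrow> real) \<Rightarrow> ('a \<Rightarrow> real) \<Rightarrow> real \<Rightarrow> 'a \<Rightarrow> ('a set \<Rightarrow> real) \<Rightarrow> bool" where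
  "lp_optimal Ps A u c BI f x \<longleftrightarrow> x \<in> flows Ps A u \<and>
     (\<forall>y\<in>flows Ps A u. lp_obj Ps c BI f y \<le> lp_obj Ps c BI f x)"

end

theory Submission
  imports Defs
begin

lemma cost_swap:
  fixes c :: "'a \<Rightarrow> real" and z :: "'a \<Rightarrow> 'a set \<Rightarrow> real"
  assumes "finite A" "finite Ps" "\<forall>P\<in>Ps. P \<subseteq> A"
  shows "(\<Sum>e\<in>A. c e * (\<Sum>P\<in>{P\<in>Ps. e \<in> P}. z e P)) = (\<Sum>P\<in>Ps. \<Sum>e\<in>P. c e * z e P)"
proof -
  have "(\<Sum>e\<in>A. c e * (\<Sum>P\<in>{P\<in>Ps. e \<in> P}. z e P)) = (\<Sum>e\<in>A. \<Sum>P\<in>{P\<in>Ps. e \<in> P}. c e * z e P)"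
    by (simp add: sum_distrib_left)
  also have "\<dots> = (\<Sum>P\<in>Ps. \<Sum>e\<in>{e\<in>A. e \<in> P}. c e * z e P)"
    by (rule sum.swap_restrict[OF assms(1,2)])
  also have "\<dots> = (\<Sum>P\<in>Ps. \<Sum>e\<in>P. c e * z e P)"
    using assms(3) by (intro sum.cong refl) (simp add: Collect_conj_eq Collect_mem_eq Int_commute, blast)
  finally show ?thesis .
qed

lemma val_nonneg: "0 \<le> val Ps x z"
  unfolding val_def by (intro sum_nonneg) auto

lemma interd_nonempty: "0 \<le> BI \<Longrightarrow> (\<lambda>e P. 0) \<in> interdictions Ps A c BI"
  unfolding interdictions_def by auto

lemma worst_le: "z \<in> interdictions Ps A c BI \<Longrightarrow> worst_val Ps A c BI x \<le> val Ps x z"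
  unfolding worst_val_def
  by (rule cINF_lower) (auto intro!: bdd_belowI2[where m=0] val_nonneg)

lemma worst_nonneg: "0 \<le> BI \<Longrightarrow> 0 \<le> worst_val Ps A c BI x"
  unfolding worst_val_def
  by (rule cINF_greatest) (auto intro: val_nonneg interd_nonempty)

lemma Min_c':
  fixes c :: "'a \<Rightarrow> real"
  assumes "finite P" "P \<noteq> {}" "0 < cf"
  shows "Min ((\<lambda>e. min (c e / cf) 1) ` P) = min (Min (c ` P) / cf) 1"
proof -
  have m: "mono (\<lambda>v::real. min (v / cf) 1)"
  proof (rule monoI)
    fix x y :: real assume "x \<le> y"
    hence "x / cf \<le> y / cf" using assms(3) by (simp add: divide_right_mono)
    thus "min (x / cf) 1 \<le> min (y / cf) 1" by linarith
  qed
  have "min (Min (c ` P) / cf) 1 = Min ((\<lambda>v. min (v / cf) 1) ` (c ` P))"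
    by (rule mono_Min_commute[OF m]) (use assms in auto)
  thus ?thesis by (simp add: image_image)
qed

lemma pointwise_lower:
  fixes a X W C :: real
  assumes "0 \<le> a" "a \<le> 1" "a * W \<le> C"
  shows "a * X - C \<le> max 0 (X - W)"
proof -
  have "a * (X - W) \<le> max 0 (X - W)"
  proof (cases "X - W \<ge> 0")
    case True thus ?thesis using assms(2) mult_right_mono[OF assms(2) True] by simp
  next
    case False thus ?thesis using assms(1) by (simp add: mult_nonneg_nonpos)
  qed
  thus ?thesis using assms(3) by (simp add: algebra_simps)
qed

lemma lower:
  fixes c :: "'a \<Rightarrow> real" and x :: "'a set \<Rightarrow> real"
  assumes fA: "finite A" and fP: "finite Ps" and PA: "\<forall>P\<in>Ps. P \<subseteq> A \<and> P \<noteq> {}"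
    and c0: "\<forall>e\<in>A. 0 \<le> c e" and cf: "0 < c f" and B0: "0 \<le> BI"
  shows "lp_obj Ps c BI f x \<le> worst_val Ps A c BI x"
  unfolding worst_val_def
proof (rule cINF_greatest)
  show "interdictions Ps A c BI \<noteq> {}" using interd_nonempty[OF B0] by blast
next
  fix z assume z: "z \<in> interdictions Ps A c BI"
  define a where "a P = Min ((\<lambda>e. min (c e / c f) 1) ` P)" for P
  have cost: "(\<Sum>P\<in>Ps. \<Sum>e\<in>P. c e * z e P) \<le> BI"
    using z cost_swap[OF fA fP, of c z] PA unfolding interdictions_def by auto
  have pw: "a P * x P - (\<Sum>e\<in>P. c e * z e P) / c f \<le> max 0 (x P - (\<Sum>e\<in>P. z e P))"
    if P: "P \<in> Ps" for P
  proof -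
    have finP: "finite P" and ne: "P \<noteq> {}" and PsA: "P \<subseteq> A"
      using P PA fA finite_subset by auto
    have aeq: "a P = min (Min (c ` P) / c f) 1"
      unfolding a_def by (rule Min_c'[OF finP ne cf])
    have "Min (c ` P) \<in> c ` P" using finP ne by simp
    hence "0 \<le> Min (c ` P)" using c0 PsA by auto
    hence a0: "0 \<le> a P" using aeq cf by simp
    have a1: "a P \<le> 1" using aeq by simp
    have ale: "a P \<le> c e / c f" if "e \<in> P" for e
    proof -
      have "Min (c ` P) \<le> c e" using finP that by simp
      hence "Min (c ` P) / c f \<le> c e / c f" using cf by (simp add: divide_right_mono)
      thus ?thesis using aeq by linarith
    qed
    have "a P * (\<Sum>e\<in>P. z e P) = (\<Sum>e\<in>P. a P * z e P)" by (simp add: sum_distrib_left)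
    also have "\<dots> \<le> (\<Sum>e\<in>P. c e * z e P / c f)"
    proof (rule sum_mono)
      fix e assume e: "e \<in> P"
      have "0 \<le> z e P" using z e P PsA unfolding interdictions_def by auto
      hence "a P * z e P \<le> (c e / c f) * z e P" using ale[OF e] by (rule mult_right_mono[rotated])
      thus "a P * z e P \<le> c e * z e P / c f" by simp
    qed
    also have "\<dots> = (\<Sum>e\<in>P. c e * z e P) / c f" by (simp add: sum_divide_distrib)
    finally show ?thesis by (rule pointwise_lower[OF a0 a1])
  qed
  have "lp_obj Ps c BI f x = (\<Sum>P\<in>Ps. a P * x P) - BI / c f"
    unfolding lp_obj_def a_def Let_def by simp
  also have "\<dots> \<le> (\<Sum>P\<in>Ps. a P * x P) - (\<Sum>P\<in>Ps. \<Sum>e\<in>P. c e * z e P) / c f"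
    using cost cf by (simp add: divide_right_mono)
  also have "\<dots> = (\<Sum>P\<in>Ps. a P * x P - (\<Sum>e\<in>P. c e * z e P) / c f)"
    by (simp add: sum_subtractf sum_divide_distrib)
  also have "\<dots> \<le> val Ps x z"
    unfolding val_def by (rule sum_mono) (rule pw)
  finally show "lp_obj Ps c BI f x \<le> val Ps x z" .
qed

lemma construct:
  fixes c :: "'a \<Rightarrow> real" and r :: "'a set \<Rightarrow> real"
  assumes fA: "finite A" and fP: "finite Ps" and PA: "\<forall>P\<in>Ps. P \<subseteq> A \<and> P \<noteq> {}"
    and r0: "\<forall>P\<in>Ps. 0 \<le> r P" and cost: "(\<Sum>P\<in>Ps. Min (c ` P) * r P) \<le> BI"
  shows "\<exists>z \<in> interdictions Ps A c BI. \<forall>P\<in>Ps. (\<Sum>e\<in>P. z e P) = r P"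
proof -
  define ep where "ep P = (SOME e. e \<in> P \<and> c e = Min (c ` P))" for P
  have ep: "ep P \<in> P \<and> c (ep P) = Min (c ` P)" if "P \<in> Ps" for P
  proof -
    have "finite P" "P \<noteq> {}" using that PA fA finite_subset by auto
    hence "Min (c ` P) \<in> c ` P" by simp
    then obtain e where "e \<in> P" "c e = Min (c ` P)" by auto
    thus ?thesis unfolding ep_def by (intro someI[where P="\<lambda>e. e \<in> P \<and> c e = Min (c ` P)"]) blast
  qed
  define z where "z e P = (if P \<in> Ps \<and> e = ep P then r P else 0)" for e P
  have fin: "finite P" if "P \<in> Ps" for P using that PA fA finite_subset by auto
  have zsum: "(\<Sum>e\<in>P. z e P) = r P" if "P \<in> Ps" for P
    using that ep[OF that] fin[OF that] by (simp add: z_def)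
  have csum: "(\<Sum>e\<in>P. c e * z e P) = Min (c ` P) * r P" if "P \<in> Ps" for P
  proof -
    have "(\<Sum>e\<in>P. c e * z e P) = (\<Sum>e\<in>P. if e = ep P then c e * r P else 0)"
      using that by (intro sum.cong) (auto simp: z_def)
    also have "\<dots> = c (ep P) * r P" using ep[OF that] fin[OF that] by simp
    finally show ?thesis using ep[OF that] by simp
  qed
  have "z \<in> interdictions Ps A c BI"
    unfolding interdictions_def
  proof (intro CollectI conjI allI ballI impI)
    fix e P assume "e \<notin> A \<or> P \<notin> Ps"
    thus "z e P = 0" using ep PA unfolding z_def by auto
  next
    fix e P assume "e \<in> A" "P \<in> Ps"
    thus "0 \<le> z e P" using r0 unfolding z_def by auto
  next
    have "(\<Sum>e\<in>A. c e * (\<Sum>P\<in>{P\<in>Ps. e \<in> P}. z e P)) = (\<Sum>P\<in>Ps. \<Sum>e\<in>P. c e * z e P)"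
      using cost_swap[OF fA fP] PA by auto
    also have "\<dots> = (\<Sum>P\<in>Ps. Min (c ` P) * r P)" by (rule sum.cong) (auto simp: csum)
    finally show "(\<Sum>e\<in>A. c e * (\<Sum>P\<in>{P\<in>Ps. e \<in> P}. z e P)) \<le> BI" using cost by simp
  qed
  thus ?thesis using zsum by blast
qed

lemma upper:
  fixes c :: "'a \<Rightarrow> real" and y :: "'a set \<Rightarrow> real"
  assumes fA: "finite A" and fP: "finite Ps" and PA: "\<forall>P\<in>Ps. P \<subseteq> A \<and> P \<noteq> {}"
    and c0: "\<forall>e\<in>A. 0 \<le> c e" and B0: "0 \<le> BI" and y0: "\<forall>P\<in>Ps. 0 \<le> y P"
  shows "worst_val Ps A c BI y \<le> 0 \<or> (\<exists>f\<in>A. 0 < c f \<and> worst_val Ps A c BI y \<le> lp_obj Ps c BI f y)"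
proof -
  define k where "k P = Min (c ` P)" for P
  have fin: "finite P" "P \<noteq> {}" "P \<subseteq> A" if "P \<in> Ps" for P using that PA fA finite_subset by auto
  have kin: "\<exists>e\<in>P. c e = k P" if "P \<in> Ps" for P
  proof -
    have "Min (c ` P) \<in> c ` P" using fin[OF that] by simp
    thus ?thesis unfolding k_def by auto
  qed
  have k0: "0 \<le> k P" if PP: "P \<in> Ps" for P
  proof -
    obtain e where "e \<in> P" "c e = k P" using kin[OF PP] by blast
    thus ?thesis using fin(3)[OF PP] c0 by force
  qed
  show ?thesis
  proof (cases "(\<Sum>P\<in>Ps. k P * y P) \<le> BI")
    case True
    then obtain z where z: "z \<in> interdictions Ps A c BI" "\<forall>P\<in>Ps. (\<Sum>e\<in>P. z e P) = y P"
      using construct[OF fA fP PA y0, of c BI] unfolding k_def by auto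
    have "val Ps y z = 0" unfolding val_def using z(2) by simp
    thus ?thesis using worst_le[OF z(1), of y] by simp
  next
    case False
    hence tot: "BI < (\<Sum>P\<in>Ps. k P * y P)" by simp
    define KS where "KS = k ` Ps"
    have fKS: "finite KS" unfolding KS_def using fP by simp
    define F where "F v = (\<Sum>P\<in>{P\<in>Ps. k P \<le> v}. k P * y P)" for v
    define S where "S = {v\<in>KS. BI < F v}"
    have PsNE: "Ps \<noteq> {}" using tot B0 by auto
    have "Max KS \<in> S"
    proof -
      have "KS \<noteq> {}" using PsNE unfolding KS_def by simp
      hence "Max KS \<in> KS" using fKS by simp
      moreover have "{P\<in>Ps. k P \<le> Max KS} = Ps" using fKS unfolding KS_def by auto
      ultimately show ?thesis using tot unfolding S_def F_def by simp
    qed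
    hence SNE: "S \<noteq> {}" by blast
    have fS: "finite S" unfolding S_def using fKS by simp
    define \<tau> where "\<tau> = Min S"
    have tS: "\<tau> \<in> S" unfolding \<tau>_def using fS SNE by simp
    then obtain P0 where P0: "P0 \<in> Ps" "\<tau> = k P0" unfolding S_def KS_def by auto
    then obtain f where f: "f \<in> P0" "c f = \<tau>" using kin by metis
    have fA': "f \<in> A" using f fin[OF P0(1)] by auto
    have tpos: "0 < \<tau>"
    proof (rule ccontr)
      assume "\<not> 0 < \<tau>"
      hence t0: "\<tau> = 0" using k0 P0 by force
      have "F \<tau> = 0" unfolding F_def t0 using k0 by (intro sum.neutral) force
      thus False using tS B0 unfolding S_def by simp
    qed
    define L where "L = (\<Sum>P\<in>{P\<in>Ps. k P < \<tau>}. k P * y P)"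
    have LB: "L \<le> BI"
    proof (cases "{v\<in>KS. v < \<tau>} = {}")
      case True
      hence "{P\<in>Ps. k P < \<tau>} = {}" unfolding KS_def by auto
      hence "L = 0" unfolding L_def by (metis sum.empty)
      thus ?thesis using B0 by simp
    next
      case False
      define m where "m = Max {v\<in>KS. v < \<tau>}"
      have mK: "m \<in> {v\<in>KS. v < \<tau>}" unfolding m_def using False fKS by (intro Max_in) auto
      have "m \<notin> S"
      proof
        assume "m \<in> S" hence "\<tau> \<le> m" unfolding \<tau>_def using fS by simp
        thus False using mK by simp
      qed
      hence "F m \<le> BI" using mK unfolding S_def by auto
      moreover have "{P\<in>Ps. k P \<le> m} = {P\<in>Ps. k P < \<tau>}"
      proof -
        have "k P \<le> m" if "P \<in> Ps" "k P < \<tau>" for P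
          unfolding m_def using that fKS by (intro Max_ge) (auto simp: KS_def)
        thus ?thesis using mK by force
      qed
      ultimately show ?thesis unfolding F_def L_def by simp
    qed
    define Yt where "Yt = (\<Sum>P\<in>{P\<in>Ps. k P = \<tau>}. y P)"
    have Fsplit: "F \<tau> = L + \<tau> * Yt"
    proof -
      have "{P\<in>Ps. k P \<le> \<tau>} = {P\<in>Ps. k P < \<tau>} \<union> {P\<in>Ps. k P = \<tau>}" by auto
      hence "F \<tau> = (\<Sum>P\<in>{P\<in>Ps. k P < \<tau>} \<union> {P\<in>Ps. k P = \<tau>}. k P * y P)"
        unfolding F_def by simp
      also have "\<dots> = L + (\<Sum>P\<in>{P\<in>Ps. k P = \<tau>}. k P * y P)"
        unfolding L_def using fP by (intro sum.union_disjoint) auto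
      also have "(\<Sum>P\<in>{P\<in>Ps. k P = \<tau>}. k P * y P) = \<tau> * Yt"
        unfolding Yt_def sum_distrib_left by (rule sum.cong) auto
      finally show ?thesis .
    qed
    have tY: "BI - L < \<tau> * Yt" using Fsplit tS unfolding S_def by simp
    define \<theta> where "\<theta> = (BI - L) / (\<tau> * Yt)"
    have tYpos: "0 < \<tau> * Yt" using tY LB by simp
    hence tYne: "\<tau> * Yt \<noteq> 0" by linarith
    have th0: "0 \<le> \<theta>" unfolding \<theta>_def using LB tYpos by simp
    have th1: "\<theta> \<le> 1" unfolding \<theta>_def using tY tYpos by simp
    have thE: "\<theta> * (\<tau> * Yt) = BI - L" unfolding \<theta>_def using tYne by (auto simp del: mult_eq_0_iff)
    define r where "r P = (if k P < \<tau> then y P else if k P = \<tau> then \<theta> * y P else 0)" for P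
    have r0: "\<forall>P\<in>Ps. 0 \<le> r P" using y0 th0 unfolding r_def by auto
    have rle: "r P \<le> y P" if "P \<in> Ps" for P
    proof -
      have "\<theta> * y P \<le> 1 * y P" using y0 that th1 by (intro mult_right_mono) auto
      thus ?thesis using y0 that unfolding r_def by auto
    qed
    have Lsum: "L = (\<Sum>P\<in>Ps. if k P < \<tau> then k P * y P else 0)"
      unfolding L_def using fP by (simp add: sum.inter_filter)
    have Ysum: "Yt = (\<Sum>P\<in>Ps. if k P = \<tau> then y P else 0)"
      unfolding Yt_def using fP by (simp add: sum.inter_filter)
    have "(\<Sum>P\<in>Ps. k P * r P) = (\<Sum>P\<in>Ps. (if k P < \<tau> then k P * y P else 0) + \<theta> * \<tau> * (if k P = \<tau> then y P else 0))"
      unfolding r_def by (rule sum.cong) auto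
    also have "\<dots> = L + \<theta> * \<tau> * Yt"
      unfolding Lsum Ysum by (simp add: sum.distrib sum_distrib_left)
    also have "\<dots> = BI" using thE by (simp add: algebra_simps)
    finally have rcost: "(\<Sum>P\<in>Ps. Min (c ` P) * r P) \<le> BI" unfolding k_def by simp
    obtain z where z: "z \<in> interdictions Ps A c BI" "\<forall>P\<in>Ps. (\<Sum>e\<in>P. z e P) = r P"
      using construct[OF fA fP PA r0 rcost] by blast
    have "val Ps y z = (\<Sum>P\<in>Ps. y P - r P)"
      unfolding val_def using z(2) rle by (intro sum.cong) auto
    also have "\<dots> = (\<Sum>P\<in>Ps. min (k P / \<tau>) 1 * y P - ((if k P < \<tau> then k P * y P else 0) / \<tau> + \<theta> * (if k P = \<tau> then y P else 0)))"
    proof (rule sum.cong[OF refl])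
      fix P assume "P \<in> Ps"
      show "y P - r P = min (k P / \<tau>) 1 * y P - ((if k P < \<tau> then k P * y P else 0) / \<tau> + \<theta> * (if k P = \<tau> then y P else 0))"
        using tpos unfolding r_def by (auto simp: min_def field_simps)
    qed
    also have "\<dots> = (\<Sum>P\<in>Ps. min (k P / \<tau>) 1 * y P) - (L / \<tau> + \<theta> * Yt)"
      unfolding Lsum Ysum by (simp add: sum_subtractf sum.distrib sum_distrib_left sum_divide_distrib)
    also have "L / \<tau> + \<theta> * Yt = BI / \<tau>"
      using thE tpos by (simp add: field_simps)
    also have "(\<Sum>P\<in>Ps. min (k P / \<tau>) 1 * y P) - BI / \<tau> = lp_obj Ps c BI f y"
      unfolding lp_obj_def Let_def f(2)
      by (simp add: k_def Min_c'[OF fin(1,2) tpos] cong: sum.cong)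
    finally have "worst_val Ps A c BI y \<le> lp_obj Ps c BI f y" using worst_le[OF z(1), of y] by simp
    thus ?thesis using fA' f tpos by auto
  qed
qed

lemma paths_props:
  assumes "finite A"
  shows "finite (st_paths tail head A s t)" "\<forall>P\<in>st_paths tail head A s t. P \<subseteq> A \<and> P \<noteq> {}"
proof -
  have sub: "st_paths tail head A s t \<subseteq> Pow A" unfolding st_paths_def st_path_def by auto
  thus "finite (st_paths tail head A s t)" using assms finite_subset by blast
  show "\<forall>P\<in>st_paths tail head A s t. P \<subseteq> A \<and> P \<noteq> {}" unfolding st_paths_def st_path_def by auto
qed

theorem theorem1:
  fixes V :: "'v set" and A :: "'a set" and tail head :: "'a \<Rightarrow> 'v" and s t :: 'v
    and u c :: "'a \<Rightarrow> real" and BI :: real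
    and xf :: "'a \<Rightarrow> 'a set \<Rightarrow> real" and fstar :: 'a
  assumes "finite V" "finite A" "\<forall>e\<in>A. tail e \<in> V \<and> head e \<in> V" "s \<in> V" "t \<in> V"
    and "\<forall>e\<in>A. 0 \<le> u e" "\<forall>e\<in>A. 0 \<le> c e" "0 \<le> BI"
    and "\<exists>e\<in>A. 0 < c e"
    and "\<forall>f\<in>A. 0 < c f \<longrightarrow> lp_optimal (st_paths tail head A s t) A u c BI f (xf f)"
    and "fstar \<in> A" "0 < c fstar"
    and "\<forall>f\<in>A. 0 < c f \<longrightarrow>
           lp_obj (st_paths tail head A s t) c BI f (xf f)
             \<le> lp_obj (st_paths tail head A s t) c BI fstar (xf fstar)"
  shows "xf fstar \<in> flows (st_paths tail head A s t) A u \<and>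
         (\<forall>y\<in>flows (st_paths tail head A s t) A u.
            worst_val (st_paths tail head A s t) A c BI y
              \<le> worst_val (st_paths tail head A s t) A c BI (xf fstar))"
proof -
  define Ps where "Ps = st_paths tail head A s t"
  have fP: "finite Ps" and PA: "\<forall>P\<in>Ps. P \<subseteq> A \<and> P \<noteq> {}"
    unfolding Ps_def using paths_props[OF assms(2), of tail head s t] by auto
  have opt: "lp_optimal Ps A u c BI fstar (xf fstar)" using assms(10-12) unfolding Ps_def by blast
  hence xin: "xf fstar \<in> flows Ps A u" unfolding lp_optimal_def by blast
  have lowstar: "lp_obj Ps c BI fstar (xf fstar) \<le> worst_val Ps A c BI (xf fstar)"
    by (rule lower[OF assms(2) fP PA assms(7) assms(12) assms(8)])
  have "worst_val Ps A c BI y \<le> worst_val Ps A c BI (xf fstar)" if y: "y \<in> flows Ps A u" for y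
  proof -
    have y0: "\<forall>P\<in>Ps. 0 \<le> y P" using y unfolding flows_def by blast
    from upper[OF assms(2) fP PA assms(7) assms(8) y0]
    show ?thesis
    proof
      assume "worst_val Ps A c BI y \<le> 0"
      thus ?thesis using worst_nonneg[OF assms(8)] by (meson order_trans)
    next
      assume "\<exists>f\<in>A. 0 < c f \<and> worst_val Ps A c BI y \<le> lp_obj Ps c BI f y"
      then obtain f where f: "f \<in> A" "0 < c f" "worst_val Ps A c BI y \<le> lp_obj Ps c BI f y" by blast
      have "lp_obj Ps c BI f y \<le> lp_obj Ps c BI f (xf f)"
        using assms(10) f y unfolding lp_optimal_def Ps_def by blast
      also have "\<dots> \<le> lp_obj Ps c BI fstar (xf fstar)" using assms(13) f unfolding Ps_def by blast
      finally show ?thesis using f(3) lowstar by linarith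
    qed
  qed
  thus ?thesis using xin unfolding Ps_def by blast
qed

end
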